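(* Let $(\Lambda,d)$ be a finitely aligned $k$-graph. Then $S_\Lambda$, with the multiplication $FG:=\bigcup_{(\lambda,\mu)\in F,(\xi,\eta)\in G}\{(\lambda\alpha,\eta\beta):(\alpha,\beta)\in\Lambda^{\min}(\mu,\xi)\}$, is an inverse semigroup, with involution given by $F^*:=\{(\mu,\lambda):(\lambda,\mu)\in F\}$; that is, for each $F\in S_\Lambda$, $F^*$ is the unique $G\in S_\Lambda$ with $FGF=F$ and $GFG=G$.
   Context: A $k$-graph $(\Lambda,d)$ is a countable small category $\Lambda$ (objects identified with identity morphisms) with a functor $d:\Lambda\to\mathbb N^k$ satisfying unique factorization: whenever $d(\lambda)=m+n$ there are unique $\mu,\nu$ with $d(\mu)=m$, $d(\nu)=n$, $\lambda=\mu\nu$. $r,s$ are range/source. $\Lambda^{\min}(\lambda,\mu)=\{(\alpha,\beta):\lambda\alpha=\mu\beta,\ d(\lambda\alpha)=d(\lambda)\vee d(\mu)\}$ ($\vee$ coordinatewise max); finitely aligned means all these sets are finite. $\Lambda*_s\Lambda=\{(\lambda,\mu):s(\lambda)=s(\mu)\}$. $S_\Lambda$ is the collection of finite $F\subseteq\Lambda*_s\Lambda$ such that distinct $(\lambda,\mu),(\nu,\omega)\in F$ satisfy $\Lambda^{\min}(\lambda,\nu)=\emptyset$ and $\Lambda^{\min}(\mu,\omega)=\emptyset$; the given product is an associative operation on $S_\Lambda$. *)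

theory Defs
  imports Main "HOL-Library.Countable_Set"
begin

text \<open>A k-graph is given by: a set of morphisms Mor, a set of objects Obj
 (identified with identity morphisms), range r, source s, composition cmp
 (cmp l m = l m, defined when s l = r m), and degree d into N^k, where N^k
 is represented by functions nat => nat vanishing from k on.\<close>

definition k_graph ::
  "nat \<Rightarrow> 'a set \<Rightarrow> 'a set \<Rightarrow> ('a \<Rightarrow> 'a) \<Rightarrow> ('a \<Rightarrow> 'a) \<Rightarrow> ('a \<Rightarrow> 'a \<Rightarrow> 'a)
    \<Rightarrow> ('a \<Rightarrow> nat \<Rightarrow> nat) \<Rightarrow> bool" where
  "k_graph k Mor Obj r s cmp d \<longleftrightarrow>
     countable Mor \<and> Obj \<subseteq> Mor \<and>
     (\<forall>l\<in>Mor. r l \<in> Obj \<and> s l \<in> Obj) \<and>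
     (\<forall>v\<in>Obj. r v = v \<and> s v = v) \<and>
     (\<forall>l\<in>Mor. \<forall>m\<in>Mor. s l = r m \<longrightarrow>
        cmp l m \<in> Mor \<and> r (cmp l m) = r l \<and> s (cmp l m) = s m) \<and>
     (\<forall>l\<in>Mor. \<forall>m\<in>Mor. \<forall>n\<in>Mor. s l = r m \<and> s m = r n \<longrightarrow>
        cmp (cmp l m) n = cmp l (cmp m n)) \<and>
     (\<forall>l\<in>Mor. cmp (r l) l = l \<and> cmp l (s l) = l) \<and>
     (\<forall>l\<in>Mor. \<forall>i\<ge>k. d l i = 0) \<and>
     (\<forall>v\<in>Obj. d v = (\<lambda>i. 0)) \<and>
     (\<forall>l\<in>Mor. \<forall>m\<in>Mor. s l = r m \<longrightarrow> d (cmp l m) = (\<lambda>i. d l i + d m i)) \<and>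
     (\<forall>l\<in>Mor. \<forall>p q. d l = (\<lambda>i. p i + q i) \<longrightarrow>
        (\<exists>!(m, n). m \<in> Mor \<and> n \<in> Mor \<and> s m = r n \<and> d m = p \<and> d n = q
                  \<and> l = cmp m n))"

definition Lmin ::
  "'a set \<Rightarrow> ('a \<Rightarrow> 'a) \<Rightarrow> ('a \<Rightarrow> 'a) \<Rightarrow> ('a \<Rightarrow> 'a \<Rightarrow> 'a) \<Rightarrow> ('a \<Rightarrow> nat \<Rightarrow> nat)
    \<Rightarrow> 'a \<Rightarrow> 'a \<Rightarrow> ('a \<times> 'a) set" where
  "Lmin Mor r s cmp d l m =
     {(a, b). a \<in> Mor \<and> b \<in> Mor \<and> s l = r a \<and> s m = r b \<and>
              cmp l a = cmp m b \<and>
              d (cmp l a) = (\<lambda>i. max (d l i) (d m i))}"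

definition finitely_aligned ::
  "'a set \<Rightarrow> ('a \<Rightarrow> 'a) \<Rightarrow> ('a \<Rightarrow> 'a) \<Rightarrow> ('a \<Rightarrow> 'a \<Rightarrow> 'a) \<Rightarrow> ('a \<Rightarrow> nat \<Rightarrow> nat) \<Rightarrow> bool" where
  "finitely_aligned Mor r s cmp d \<longleftrightarrow>
     (\<forall>l\<in>Mor. \<forall>m\<in>Mor. finite (Lmin Mor r s cmp d l m))"

definition fib_s :: "'a set \<Rightarrow> ('a \<Rightarrow> 'a) \<Rightarrow> ('a \<times> 'a) set" where
  "fib_s Mor s = {(l, m). l \<in> Mor \<and> m \<in> Mor \<and> s l = s m}"

definition S_Lambda ::
  "'a set \<Rightarrow> ('a \<Rightarrow> 'a) \<Rightarrow> ('a \<Rightarrow> 'a) \<Rightarrow> ('a \<Rightarrow> 'a \<Rightarrow> 'a) \<Rightarrow> ('a \<Rightarrow> nat \<Rightarrow> nat)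
    \<Rightarrow> ('a \<times> 'a) set set" where
  "S_Lambda Mor r s cmp d =
     {F. finite F \<and> F \<subseteq> fib_s Mor s \<and>
         (\<forall>(l, m)\<in>F. \<forall>(n, w)\<in>F. (l, m) \<noteq> (n, w) \<longrightarrow>
             Lmin Mor r s cmp d l n = {} \<and> Lmin Mor r s cmp d m w = {})}"

definition S_mult ::
  "'a set \<Rightarrow> ('a \<Rightarrow> 'a) \<Rightarrow> ('a \<Rightarrow> 'a) \<Rightarrow> ('a \<Rightarrow> 'a \<Rightarrow> 'a) \<Rightarrow> ('a \<Rightarrow> nat \<Rightarrow> nat)
    \<Rightarrow> ('a \<times> 'a) set \<Rightarrow> ('a \<times> 'a) set \<Rightarrow> ('a \<times> 'a) set" where
  "S_mult Mor r s cmp d F G =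
     (\<Union>(l, m)\<in>F. \<Union>(x, e)\<in>G.
        {(cmp l a, cmp e b) | a b. (a, b) \<in> Lmin Mor r s cmp d m x})"

definition S_star :: "('a \<times> 'a) set \<Rightarrow> ('a \<times> 'a) set" where
  "S_star F = {(m, l). (l, m) \<in> F}"

end

theory Submission
  imports Defs
begin

locale kg =
  fixes k :: nat and Mor Obj :: "'a set" and r s :: "'a \<Rightarrow> 'a"
    and cmp :: "'a \<Rightarrow> 'a \<Rightarrow> 'a" and d :: "'a \<Rightarrow> nat \<Rightarrow> nat"
  assumes kg: "k_graph k Mor Obj r s cmp d"
begin

abbreviation "LM \<equiv> Lmin Mor r s cmp d"

lemma K1: "Obj \<subseteq> Mor" using kg unfolding k_graph_def by (elim conjE) assumption
lemma K2: "\<forall>l\<in>Mor. r l \<in> Obj \<and> s l \<in> Obj" using kg unfolding k_graph_def by (elim conjE) assumption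
lemma K3: "\<forall>v\<in>Obj. r v = v \<and> s v = v" using kg unfolding k_graph_def by (elim conjE) assumption
lemma K4: "\<forall>l\<in>Mor. \<forall>m\<in>Mor. s l = r m \<longrightarrow>
        cmp l m \<in> Mor \<and> r (cmp l m) = r l \<and> s (cmp l m) = s m" using kg unfolding k_graph_def by (elim conjE) assumption
lemma K5: "\<forall>l\<in>Mor. \<forall>m\<in>Mor. \<forall>n\<in>Mor. s l = r m \<and> s m = r n \<longrightarrow>
        cmp (cmp l m) n = cmp l (cmp m n)" using kg unfolding k_graph_def by (elim conjE) assumption
lemma K6: "\<forall>l\<in>Mor. cmp (r l) l = l \<and> cmp l (s l) = l" using kg unfolding k_graph_def by (elim conjE) assumption
lemma K7: "\<forall>v\<in>Obj. d v = (\<lambda>i. 0)" using kg unfolding k_graph_def by (elim conjE) assumption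
lemma K8: "\<forall>l\<in>Mor. \<forall>m\<in>Mor. s l = r m \<longrightarrow> d (cmp l m) = (\<lambda>i. d l i + d m i)"
  using kg unfolding k_graph_def by (elim conjE) assumption
lemma K9: "\<forall>l\<in>Mor. \<forall>p q. d l = (\<lambda>i. p i + q i) \<longrightarrow>
        (\<exists>!(m, n). m \<in> Mor \<and> n \<in> Mor \<and> s m = r n \<and> d m = p \<and> d n = q
                  \<and> l = cmp m n)" using kg unfolding k_graph_def by (elim conjE) assumption

lemma obj_mor: "v \<in> Obj \<Longrightarrow> v \<in> Mor" using K1 by blast
lemma r_obj: "l \<in> Mor \<Longrightarrow> r l \<in> Obj" using K2 by blast
lemma s_obj: "l \<in> Mor \<Longrightarrow> s l \<in> Obj" using K2 by blast
lemma r_mor[simp]: "l \<in> Mor \<Longrightarrow> r l \<in> Mor" using obj_mor r_obj by blast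
lemma s_mor[simp]: "l \<in> Mor \<Longrightarrow> s l \<in> Mor" using obj_mor s_obj by blast
lemma obj_r: "v \<in> Obj \<Longrightarrow> r v = v" using K3 by blast
lemma obj_s: "v \<in> Obj \<Longrightarrow> s v = v" using K3 by blast
lemma rr[simp]: "l \<in> Mor \<Longrightarrow> r (r l) = r l" using obj_r r_obj by blast
lemma sr[simp]: "l \<in> Mor \<Longrightarrow> s (r l) = r l" using obj_s r_obj by blast
lemma rs[simp]: "l \<in> Mor \<Longrightarrow> r (s l) = s l" using obj_r s_obj by blast
lemma ss[simp]: "l \<in> Mor \<Longrightarrow> s (s l) = s l" using obj_s s_obj by blast
lemma comp_mor[simp]: "l \<in> Mor \<Longrightarrow> m \<in> Mor \<Longrightarrow> s l = r m \<Longrightarrow> cmp l m \<in> Mor"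
  using K4 by blast
lemma r_comp[simp]: "l \<in> Mor \<Longrightarrow> m \<in> Mor \<Longrightarrow> s l = r m \<Longrightarrow> r (cmp l m) = r l"
  using K4 by blast
lemma s_comp[simp]: "l \<in> Mor \<Longrightarrow> m \<in> Mor \<Longrightarrow> s l = r m \<Longrightarrow> s (cmp l m) = s m"
  using K4 by blast
lemma assoc: "l \<in> Mor \<Longrightarrow> m \<in> Mor \<Longrightarrow> n \<in> Mor \<Longrightarrow> s l = r m \<Longrightarrow> s m = r n \<Longrightarrow>
   cmp (cmp l m) n = cmp l (cmp m n)"
  using K5 by blast
lemma idl[simp]: "l \<in> Mor \<Longrightarrow> cmp (r l) l = l" using K6 by blast
lemma idr[simp]: "l \<in> Mor \<Longrightarrow> cmp l (s l) = l" using K6 by blast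
lemma d_obj: "v \<in> Obj \<Longrightarrow> d v = (\<lambda>i. 0)" using K7 by blast
lemma d_r[simp]: "l \<in> Mor \<Longrightarrow> d (r l) i = 0" using d_obj r_obj by metis
lemma d_s[simp]: "l \<in> Mor \<Longrightarrow> d (s l) i = 0" using d_obj s_obj by metis
lemma d_comp: "l \<in> Mor \<Longrightarrow> m \<in> Mor \<Longrightarrow> s l = r m \<Longrightarrow> d (cmp l m) = (\<lambda>i. d l i + d m i)"
  using K8 by blast
lemma d_comp_i[simp]: "l \<in> Mor \<Longrightarrow> m \<in> Mor \<Longrightarrow> s l = r m \<Longrightarrow> d (cmp l m) i = d l i + d m i"
  using d_comp by metis
lemma fact: "l \<in> Mor \<Longrightarrow> d l = (\<lambda>i. p i + q i) \<Longrightarrow>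
   (\<exists>!(m, n). m \<in> Mor \<and> n \<in> Mor \<and> s m = r n \<and> d m = p \<and> d n = q \<and> l = cmp m n)"
  using K9 by blast

lemma fact_ex:
  assumes "l \<in> Mor" "d l = (\<lambda>i. p i + q i)"
  shows "\<exists>m n. m \<in> Mor \<and> n \<in> Mor \<and> s m = r n \<and> d m = p \<and> d n = q \<and> l = cmp m n"
proof -
  obtain z where "case z of (m, n) \<Rightarrow> m \<in> Mor \<and> n \<in> Mor \<and> s m = r n \<and> d m = p \<and> d n = q \<and> l = cmp m n"
    using ex1_implies_ex[OF fact[OF assms]] by (elim exE)
  thus ?thesis by (cases z) (simp only: prod.case, blast)
qed

lemma fact_uniq:
  assumes "m \<in> Mor" "n \<in> Mor" "m' \<in> Mor" "n' \<in> Mor" "s m = r n" "s m' = r n'"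
    "cmp m n = cmp m' n'" "d m = d m'"
  shows "m = m' \<and> n = n'"
proof -
  have dl: "d (cmp m n) = (\<lambda>i. d m i + d n i)" using assms(1,2,5) by (rule d_comp)
  have "d n i = d n' i" for i
  proof -
    have e1: "d (cmp m n) i = d m i + d n i" using assms(1,2,5) by (rule d_comp_i)
    have e2: "d (cmp m' n') i = d m' i + d n' i" using assms(3,4,6) by (rule d_comp_i)
    have "d m i + d n i = d m' i + d n' i" using e1 e2 assms(7) by simp
    moreover have "d m i = d m' i" using assms(8) by simp
    ultimately show ?thesis by linarith
  qed
  hence dn: "d n = d n'" by (rule ext)
  define P where "P = (\<lambda>z. case z of (x, y) \<Rightarrow> x \<in> Mor \<and> y \<in> Mor \<and> s x = r y \<and> d x = d m \<and> d y = d n \<and> cmp m n = cmp x y)"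
  have cm: "cmp m n \<in> Mor" using assms(1,2,5) by (rule comp_mor)
  have "\<exists>!z. P z" unfolding P_def by (rule fact[OF cm dl])
  hence U: "Uniq P" by (simp add: ex1_iff_ex_Uniq)
  have "P (m, n)" unfolding P_def prod.case using assms(1,2,5) by simp
  moreover have "P (m', n')" unfolding P_def prod.case using assms(3,4,6,7,8) dn by simp
  ultimately have "(m, n) = (m', n')" by (rule Uniq_D[OF U])
  thus ?thesis by simp
qed

lemma left_cancel:
  assumes "l \<in> Mor" "a \<in> Mor" "b \<in> Mor" "s l = r a" "s l = r b" "cmp l a = cmp l b"
  shows "a = b"
  using fact_uniq[of l a l b] assms by auto

lemma deg0:
  assumes "a \<in> Mor" "\<And>i. d a i = 0"
  shows "a = r a" "a = s a"
proof -
  have "r a = a \<and> a = s a"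
    by (rule fact_uniq) (use assms in auto)
  thus "a = r a" "a = s a" by auto
qed


lemma ext_Lmin:
  assumes "l \<in> Mor" "m \<in> Mor" "a \<in> Mor" "b \<in> Mor" "s l = r a" "s m = r b"
    "cmp l a = cmp m b"
  shows "\<exists>a' b' c. (a', b') \<in> LM l m \<and> c \<in> Mor \<and> s a' = r c \<and> s b' = r c
           \<and> a = cmp a' c \<and> b = cmp b' c"
proof -
  define x where "x = cmp l a"
  define j where "j = (\<lambda>i. max (d l i) (d m i))"
  have x: "x \<in> Mor" using assms x_def by simp
  have dxl: "d x i = d l i + d a i" for i unfolding x_def using assms by (metis d_comp_i)
  have dxm: "d x i = d m i + d b i" for i unfolding x_def using assms by (metis d_comp_i)
  have "d x i = j i + (d x i - j i)" for i using dxl[of i] dxm[of i] by (simp add: j_def max_def)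
  hence dxe: "d x = (\<lambda>i. j i + (d x i - j i))" by (rule ext)
  obtain \<rho> \<tau> where rt: "\<rho> \<in> Mor" "\<tau> \<in> Mor" "s \<rho> = r \<tau>" "d \<rho> = j" "x = cmp \<rho> \<tau>"
    using fact_ex[OF x dxe] by blast
  have "d \<rho> i = d l i + (j i - d l i)" for i using rt by (simp add: j_def)
  hence dr1: "d \<rho> = (\<lambda>i. d l i + (j i - d l i))" by (rule ext)
  obtain l' a' where la: "l' \<in> Mor" "a' \<in> Mor" "s l' = r a'" "d l' = d l" "\<rho> = cmp l' a'"
    using fact_ex[OF rt(1) dr1] by blast
  have "d \<rho> i = d m i + (j i - d m i)" for i using rt by (simp add: j_def)
  hence dr2: "d \<rho> = (\<lambda>i. d m i + (j i - d m i))" by (rule ext)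
  obtain m' b' where mb: "m' \<in> Mor" "b' \<in> Mor" "s m' = r b'" "d m' = d m" "\<rho> = cmp m' b'"
    using fact_ex[OF rt(1) dr2] by blast
  have sa': "s a' = r \<tau>" using rt la by simp
  have sb': "s b' = r \<tau>" using rt mb by simp
  have "cmp l' (cmp a' \<tau>) = cmp l a" using la rt x_def assoc sa' by simp
  hence 1: "l' = l \<and> cmp a' \<tau> = a"
    using fact_uniq[of l' "cmp a' \<tau>" l a] la rt sa' assms by simp
  have "cmp m' (cmp b' \<tau>) = cmp m b" using mb rt x_def assoc sb' assms by simp
  hence 2: "m' = m \<and> cmp b' \<tau> = b"
    using fact_uniq[of m' "cmp b' \<tau>" m b] mb rt sb' assms by simp
  have "(a', b') \<in> LM l m"
    unfolding Lmin_def using 1 2 la mb rt by (auto simp: j_def)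
  thus ?thesis using 1 2 rt sa' sb' by metis
qed

lemma Lmin_D:
  assumes "(a, b) \<in> LM l m"
  shows "a \<in> Mor" "b \<in> Mor" "s l = r a" "s m = r b" "cmp l a = cmp m b"
    "d (cmp l a) i = max (d l i) (d m i)"
  using assms unfolding Lmin_def by auto

lemma Lmin_self:
  assumes "l \<in> Mor" shows "LM l l = {(s l, s l)}"
proof -
  have "(a, b) \<in> LM l l \<Longrightarrow> a = s l \<and> b = s l" for a b
  proof -
    assume h: "(a, b) \<in> LM l l"
    note h2 = Lmin_D[OF h]
    have ab: "a = b" using left_cancel[OF assms] h2 by metis
    have "d (cmp l a) i = d l i" for i using h2 by (metis max.idem)
    moreover have "d (cmp l a) i = d l i + d a i" for i using d_comp_i assms h2 by metis
    ultimately have "d a i = 0" for i by (metis add_cancel_right_right)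
    hence "a = r a" using deg0(1) h2 by metis
    thus ?thesis using ab h2 by metis
  qed
  moreover have "(s l, s l) \<in> LM l l" unfolding Lmin_def using assms by simp
  ultimately show ?thesis
  proof (intro set_eqI iffI)
    fix z assume z: "z \<in> LM l l"
    obtain a b where zab: "z = (a, b)" by (cases z)
    hence "a = s l \<and> b = s l" using z \<open>\<And>a b. (a, b) \<in> LM l l \<Longrightarrow> a = s l \<and> b = s l\<close> by blast
    thus "z \<in> {(s l, s l)}" using zab by simp
  next
    fix z assume "z \<in> {(s l, s l)}"
    thus "z \<in> LM l l" using \<open>(s l, s l) \<in> LM l l\<close> by simp
  qed
qed

abbreviation "SS \<equiv> S_Lambda Mor r s cmp d"
abbreviation "mm \<equiv> S_mult Mor r s cmp d"

lemma S_fib0: "F \<in> SS \<Longrightarrow> (l, m) \<in> F \<Longrightarrow> l \<in> Mor \<and> m \<in> Mor \<and> s l = s m"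
  unfolding S_Lambda_def fib_s_def by auto

lemma S_fib: assumes "F \<in> SS" "(l, m) \<in> F" shows "l \<in> Mor" "m \<in> Mor" "s l = s m"
  using S_fib0[OF assms] by auto

lemma S_dis: "F \<in> SS \<Longrightarrow> (l, m) \<in> F \<Longrightarrow> (n, w) \<in> F \<Longrightarrow> (l, m) \<noteq> (n, w) \<Longrightarrow>
   LM l n = {} \<and> LM m w = {}"
  unfolding S_Lambda_def mem_Collect_eq by fast

lemma S_disj1:
  assumes "F \<in> SS" "(l1, m1) \<in> F" "(l2, m2) \<in> F" "x \<in> Mor" "y \<in> Mor"
    "s l1 = r x" "s l2 = r y" "cmp l1 x = cmp l2 y"
  shows "(l1, m1) = (l2, m2)"
proof (rule ccontr)
  assume "(l1, m1) \<noteq> (l2, m2)"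
  hence "LM l1 l2 = {}" by (rule S_dis[OF assms(1,2,3), THEN conjunct1])
  moreover have "LM l1 l2 \<noteq> {}"
  proof -
    have "l1 \<in> Mor" "l2 \<in> Mor" using S_fib[OF assms(1,2)] S_fib[OF assms(1,3)] by auto
    from ext_Lmin[OF this assms(4-8)] obtain a' b' where "(a', b') \<in> LM l1 l2" by blast
    thus ?thesis by blast
  qed
  ultimately show False by simp
qed

lemma S_disj2:
  assumes "F \<in> SS" "(l1, m1) \<in> F" "(l2, m2) \<in> F" "x \<in> Mor" "y \<in> Mor"
    "s m1 = r x" "s m2 = r y" "cmp m1 x = cmp m2 y"
  shows "(l1, m1) = (l2, m2)"
proof (rule ccontr)
  assume "(l1, m1) \<noteq> (l2, m2)"
  hence "LM m1 m2 = {}" by (rule S_dis[OF assms(1,2,3), THEN conjunct2])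
  moreover have "LM m1 m2 \<noteq> {}"
  proof -
    have "m1 \<in> Mor" "m2 \<in> Mor" using S_fib[OF assms(1,2)] S_fib[OF assms(1,3)] by auto
    from ext_Lmin[OF this assms(4-8)] obtain a' b' where "(a', b') \<in> LM m1 m2" by blast
    thus ?thesis by blast
  qed
  ultimately show False by simp
qed

lemma mult_mem: "(x, y) \<in> mm F G \<longleftrightarrow> (\<exists>l m \<xi> \<eta> a b. (l, m) \<in> F \<and> (\<xi>, \<eta>) \<in> G \<and>
    (a, b) \<in> LM m \<xi> \<and> x = cmp l a \<and> y = cmp \<eta> b)"
  unfolding S_mult_def by fast

lemma Lmin_deg_eq:
  assumes "(a1, b1) \<in> LM m \<xi>" "(a2, b2) \<in> LM m \<xi>" "m \<in> Mor" "\<xi> \<in> Mor"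
  shows "d a1 = d a2 \<and> d b1 = d b2"
proof -
  note A = Lmin_D[OF assms(1)] and B = Lmin_D[OF assms(2)]
  have 1: "d a1 i = d a2 i" for i
  proof -
    have "d (cmp m a1) i = d m i + d a1 i" by (rule d_comp_i[OF assms(3) A(1) A(3)])
    moreover have "d (cmp m a2) i = d m i + d a2 i" by (rule d_comp_i[OF assms(3) B(1) B(3)])
    ultimately show ?thesis using A(6)[of i] B(6)[of i] by linarith
  qed
  have 2: "d b1 i = d b2 i" for i
  proof -
    have "d (cmp \<xi> b1) i = d \<xi> i + d b1 i" by (rule d_comp_i[OF assms(4) A(2) A(4)])
    moreover have "d (cmp \<xi> b2) i = d \<xi> i + d b2 i" by (rule d_comp_i[OF assms(4) B(2) B(4)])
    ultimately show ?thesis using A(5) B(5) A(6)[of i] B(6)[of i] by simp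
  qed
  show ?thesis by (intro conjI ext) (rule 1, rule 2)
qed

lemma core_fin:
  assumes "(a1, b1) \<in> LM m \<xi>" "(a2, b2) \<in> LM m \<xi>" "m \<in> Mor" "\<xi> \<in> Mor"
    "p \<in> Mor" "q \<in> Mor" "s a1 = r p" "s a2 = r q"
    "cmp a1 p = cmp a2 q" "cmp b1 p = cmp b2 q"
  shows "a1 = a2 \<and> b1 = b2"
proof -
  note A = Lmin_D[OF assms(1)] and B = Lmin_D[OF assms(2)]
  note D = Lmin_deg_eq[OF assms(1-4)]
  have sb1: "s b1 = s a1" using s_comp[OF assms(3) A(1) A(3)] s_comp[OF assms(4) A(2) A(4)] A(5) by simp
  have sb2: "s b2 = s a2" using s_comp[OF assms(3) B(1) B(3)] s_comp[OF assms(4) B(2) B(4)] B(5) by simp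
  have "a1 = a2" using fact_uniq[OF A(1) assms(5) B(1) assms(6) assms(7) assms(8) assms(9)] D by blast
  moreover have "b1 = b2"
    using fact_uniq[OF A(2) assms(5) B(2) assms(6) _ _ assms(10)] D sb1 sb2 assms(7,8) by simp
  ultimately show ?thesis by blast
qed

lemma mult_core:
  assumes F: "F \<in> SS" and G: "G \<in> SS"
    and 1: "(l1, m1) \<in> F" "(\<xi>1, \<eta>1) \<in> G" "(a1, b1) \<in> LM m1 \<xi>1"
    and 2: "(l2, m2) \<in> F" "(\<xi>2, \<eta>2) \<in> G" "(a2, b2) \<in> LM m2 \<xi>2"
    and pq: "p \<in> Mor" "q \<in> Mor" "s a1 = r p" "s a2 = r q"
    and eq: "cmp (cmp l1 a1) p = cmp (cmp l2 a2) q \<or> cmp (cmp \<eta>1 b1) p = cmp (cmp \<eta>2 b2) q"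
  shows "(cmp l1 a1, cmp \<eta>1 b1) = (cmp l2 a2, cmp \<eta>2 b2)"
proof -
  note A = Lmin_D[OF 1(3)] and B = Lmin_D[OF 2(3)]
  note fF1 = S_fib[OF F 1(1)] and fG1 = S_fib[OF G 1(2)]
  note fF2 = S_fib[OF F 2(1)] and fG2 = S_fib[OF G 2(2)]
  have sl1: "s l1 = r a1" using fF1(3) A(3) by simp
  have sl2: "s l2 = r a2" using fF2(3) B(3) by simp
  have se1: "s \<eta>1 = r b1" using fG1(3) A(4) by simp
  have se2: "s \<eta>2 = r b2" using fG2(3) B(4) by simp
  have sb1: "s b1 = s a1" using s_comp[OF fF1(2) A(1) A(3)] s_comp[OF fG1(1) A(2) A(4)] A(5) by simp
  have sb2: "s b2 = s a2" using s_comp[OF fF2(2) B(1) B(3)] s_comp[OF fG2(1) B(2) B(4)] B(5) by simp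
  have sbp1: "s b1 = r p" using sb1 pq(3) by simp
  have sbp2: "s b2 = r q" using sb2 pq(4) by simp
  have ap1: "cmp a1 p \<in> Mor" "r (cmp a1 p) = r a1" using A(1) pq(1) pq(3) by simp_all
  have ap2: "cmp a2 q \<in> Mor" "r (cmp a2 q) = r a2" using B(1) pq(2) pq(4) by simp_all
  have bp1: "cmp b1 p \<in> Mor" "r (cmp b1 p) = r b1" using A(2) pq(1) sbp1 by simp_all
  have bp2: "cmp b2 q \<in> Mor" "r (cmp b2 q) = r b2" using B(2) pq(2) sbp2 by simp_all
  have c1: "cmp (cmp l1 a1) p = cmp l1 (cmp a1 p)" by (rule assoc[OF fF1(1) A(1) pq(1) sl1 pq(3)])
  have c2: "cmp (cmp l2 a2) q = cmp l2 (cmp a2 q)" by (rule assoc[OF fF2(1) B(1) pq(2) sl2 pq(4)])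
  have c3: "cmp (cmp m1 a1) p = cmp m1 (cmp a1 p)" by (rule assoc[OF fF1(2) A(1) pq(1) A(3) pq(3)])
  have c4: "cmp (cmp m2 a2) q = cmp m2 (cmp a2 q)" by (rule assoc[OF fF2(2) B(1) pq(2) B(3) pq(4)])
  have c5: "cmp (cmp \<xi>1 b1) p = cmp \<xi>1 (cmp b1 p)" by (rule assoc[OF fG1(1) A(2) pq(1) A(4) sbp1])
  have c6: "cmp (cmp \<xi>2 b2) q = cmp \<xi>2 (cmp b2 q)" by (rule assoc[OF fG2(1) B(2) pq(2) B(4) sbp2])
  have c7: "cmp (cmp \<eta>1 b1) p = cmp \<eta>1 (cmp b1 p)" by (rule assoc[OF fG1(2) A(2) pq(1) se1 sbp1])
  have c8: "cmp (cmp \<eta>2 b2) q = cmp \<eta>2 (cmp b2 q)" by (rule assoc[OF fG2(2) B(2) pq(2) se2 sbp2])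
  have same: "(l1, m1) = (l2, m2) \<and> (\<xi>1, \<eta>1) = (\<xi>2, \<eta>2) \<and> cmp a1 p = cmp a2 q \<and> cmp b1 p = cmp b2 q"
    using eq
  proof
    assume e: "cmp (cmp l1 a1) p = cmp (cmp l2 a2) q"
    have e': "cmp l1 (cmp a1 p) = cmp l2 (cmp a2 q)" using e c1 c2 by simp
    have L: "(l1, m1) = (l2, m2)"
      by (rule S_disj1[OF F 1(1) 2(1) ap1(1) ap2(1) _ _ e']) (simp_all add: ap1(2) ap2(2) sl1 sl2)
    hence L1: "l1 = l2" "m1 = m2" by simp_all
    have ap: "cmp a1 p = cmp a2 q"
      by (rule left_cancel[OF fF1(1) ap1(1) ap2(1)]) (use e' L1 ap1(2) ap2(2) sl1 sl2 in simp_all)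
    have "cmp \<xi>1 (cmp b1 p) = cmp (cmp \<xi>1 b1) p" using c5 by simp
    also have "\<dots> = cmp (cmp m1 a1) p" using A(5) by simp
    also have "\<dots> = cmp m1 (cmp a1 p)" using c3 by simp
    also have "\<dots> = cmp m2 (cmp a2 q)" using L1 ap by simp
    also have "\<dots> = cmp (cmp m2 a2) q" using c4 by simp
    also have "\<dots> = cmp (cmp \<xi>2 b2) q" using B(5) by simp
    also have "\<dots> = cmp \<xi>2 (cmp b2 q)" using c6 by simp
    finally have ex: "cmp \<xi>1 (cmp b1 p) = cmp \<xi>2 (cmp b2 q)" .
    have X: "(\<xi>1, \<eta>1) = (\<xi>2, \<eta>2)"
      by (rule S_disj1[OF G 1(2) 2(2) bp1(1) bp2(1) _ _ ex]) (simp_all add: bp1(2) bp2(2) A(4) B(4))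
    hence X1: "\<xi>1 = \<xi>2" "\<eta>1 = \<eta>2" by simp_all
    have bp: "cmp b1 p = cmp b2 q"
      by (rule left_cancel[OF fG1(1) bp1(1) bp2(1)]) (use ex X1 bp1(2) bp2(2) A(4) B(4) in simp_all)
    show ?thesis using L X ap bp by blast
  next
    assume e: "cmp (cmp \<eta>1 b1) p = cmp (cmp \<eta>2 b2) q"
    have e': "cmp \<eta>1 (cmp b1 p) = cmp \<eta>2 (cmp b2 q)" using e c7 c8 by simp
    have X: "(\<xi>1, \<eta>1) = (\<xi>2, \<eta>2)"
      by (rule S_disj2[OF G 1(2) 2(2) bp1(1) bp2(1) _ _ e']) (simp_all add: bp1(2) bp2(2) se1 se2)
    hence X1: "\<xi>1 = \<xi>2" "\<eta>1 = \<eta>2" by simp_all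
    have bp: "cmp b1 p = cmp b2 q"
      by (rule left_cancel[OF fG1(2) bp1(1) bp2(1)]) (use e' X1 bp1(2) bp2(2) se1 se2 in simp_all)
    have "cmp m1 (cmp a1 p) = cmp (cmp m1 a1) p" using c3 by simp
    also have "\<dots> = cmp (cmp \<xi>1 b1) p" using A(5) by simp
    also have "\<dots> = cmp \<xi>1 (cmp b1 p)" using c5 by simp
    also have "\<dots> = cmp \<xi>2 (cmp b2 q)" using X1 bp by simp
    also have "\<dots> = cmp (cmp \<xi>2 b2) q" using c6 by simp
    also have "\<dots> = cmp (cmp m2 a2) q" using B(5) by simp
    also have "\<dots> = cmp m2 (cmp a2 q)" using c4 by simp
    finally have em: "cmp m1 (cmp a1 p) = cmp m2 (cmp a2 q)" .
    have L: "(l1, m1) = (l2, m2)"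
      by (rule S_disj2[OF F 1(1) 2(1) ap1(1) ap2(1) _ _ em]) (simp_all add: ap1(2) ap2(2) A(3) B(3))
    hence L1: "l1 = l2" "m1 = m2" by simp_all
    have ap: "cmp a1 p = cmp a2 q"
      by (rule left_cancel[OF fF1(2) ap1(1) ap2(1)]) (use em L1 ap1(2) ap2(2) A(3) B(3) in simp_all)
    show ?thesis using L X ap bp by blast
  qed
  hence L1: "l1 = l2" "m1 = m2" and X1: "\<xi>1 = \<xi>2" "\<eta>1 = \<eta>2"
    and ap: "cmp a1 p = cmp a2 q" and bp: "cmp b1 p = cmp b2 q" by simp_all
  have B2: "(a2, b2) \<in> LM m1 \<xi>1" using 2(3) L1 X1 by simp
  have "a1 = a2 \<and> b1 = b2" by (rule core_fin[OF 1(3) B2 fF1(2) fG1(1) pq ap bp])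
  thus ?thesis using L1 X1 by simp
qed

lemma mult_elem:
  assumes "z \<in> mm F G"
  obtains l m \<xi> \<eta> a b where "(l, m) \<in> F" "(\<xi>, \<eta>) \<in> G" "(a, b) \<in> LM m \<xi>"
      "z = (cmp l a, cmp \<eta> b)"
proof -
  obtain x y where z: "z = (x, y)" by (cases z)
  hence "(x, y) \<in> mm F G" using assms by simp
  then obtain l m \<xi> \<eta> a b where "(l, m) \<in> F" "(\<xi>, \<eta>) \<in> G" "(a, b) \<in> LM m \<xi>"
      "x = cmp l a" "y = cmp \<eta> b" unfolding mult_mem by blast
  thus ?thesis using that z by blast
qed

lemma mult_closed:
  assumes fa: "finitely_aligned Mor r s cmp d" and F: "F \<in> SS" and G: "G \<in> SS"
  shows "mm F G \<in> SS"
proof -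
  have eqU: "mm F G \<subseteq> (\<Union>p\<in>F. \<Union>q\<in>G. (\<lambda>(a, b). (cmp (fst p) a, cmp (snd q) b)) ` LM (snd p) (fst q))"
  proof
    fix z assume "z \<in> mm F G"
    then obtain l m \<xi> \<eta> a b where h: "(l, m) \<in> F" "(\<xi>, \<eta>) \<in> G" "(a, b) \<in> LM m \<xi>"
      "z = (cmp l a, cmp \<eta> b)" by (rule mult_elem)
    have "z \<in> (\<lambda>(a, b). (cmp (fst (l, m)) a, cmp (snd (\<xi>, \<eta>)) b)) ` LM (snd (l, m)) (fst (\<xi>, \<eta>))"
      using h(3,4) by force
    thus "z \<in> (\<Union>p\<in>F. \<Union>q\<in>G. (\<lambda>(a, b). (cmp (fst p) a, cmp (snd q) b)) ` LM (snd p) (fst q))"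
      using h(1,2) by blast
  qed
  have fF: "finite F" "finite G" using F G unfolding S_Lambda_def by auto
  have "finite (LM (snd p) (fst q))" if "p \<in> F" "q \<in> G" for p q
  proof -
    have "snd p \<in> Mor" using S_fib(2)[OF F, of "fst p" "snd p"] that by simp
    moreover have "fst q \<in> Mor" using S_fib(1)[OF G, of "fst q" "snd q"] that by simp
    ultimately show ?thesis using fa unfolding finitely_aligned_def by blast
  qed
  hence "finite (\<Union>p\<in>F. \<Union>q\<in>G. (\<lambda>(a, b). (cmp (fst p) a, cmp (snd q) b)) ` LM (snd p) (fst q))"
    using fF by (intro finite_UN_I finite_imageI) auto
  hence fin: "finite (mm F G)" using eqU finite_subset by blast
  have fib: "mm F G \<subseteq> fib_s Mor s"
  proof
    fix z assume "z \<in> mm F G"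
    then obtain l m \<xi> \<eta> a b where h: "(l, m) \<in> F" "(\<xi>, \<eta>) \<in> G" "(a, b) \<in> LM m \<xi>"
      "z = (cmp l a, cmp \<eta> b)" by (rule mult_elem)
    note A = Lmin_D[OF h(3)] and f1 = S_fib[OF F h(1)] and f2 = S_fib[OF G h(2)]
    have sb: "s b = s a" using s_comp[OF f1(2) A(1) A(3)] s_comp[OF f2(1) A(2) A(4)] A(5) by simp
    have sl: "s l = r a" using f1(3) A(3) by simp
    have se: "s \<eta> = r b" using f2(3) A(4) by simp
    have "cmp l a \<in> Mor" "cmp \<eta> b \<in> Mor" "s (cmp l a) = s (cmp \<eta> b)"
      using f1(1) A(1) sl f2(2) A(2) se sb by simp_all
    thus "z \<in> fib_s Mor s" unfolding fib_s_def using h(4) by simp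
  qed
  have dis: "LM x1 x2 = {} \<and> LM y1 y2 = {}"
    if z: "(x1, y1) \<in> mm F G" "(x2, y2) \<in> mm F G" "(x1, y1) \<noteq> (x2, y2)" for x1 y1 x2 y2
  proof -
    obtain l1 m1 \<xi>1 \<eta>1 a1 b1 where h1: "(l1, m1) \<in> F" "(\<xi>1, \<eta>1) \<in> G" "(a1, b1) \<in> LM m1 \<xi>1"
      "(x1, y1) = (cmp l1 a1, cmp \<eta>1 b1)" using z(1) by (rule mult_elem)
    obtain l2 m2 \<xi>2 \<eta>2 a2 b2 where h2: "(l2, m2) \<in> F" "(\<xi>2, \<eta>2) \<in> G" "(a2, b2) \<in> LM m2 \<xi>2"
      "(x2, y2) = (cmp l2 a2, cmp \<eta>2 b2)" using z(2) by (rule mult_elem)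
    note A = Lmin_D[OF h1(3)] and B = Lmin_D[OF h2(3)]
    note f1 = S_fib[OF F h1(1)] and g1 = S_fib[OF G h1(2)]
    note f2 = S_fib[OF F h2(1)] and g2 = S_fib[OF G h2(2)]
    have x1: "x1 = cmp l1 a1" "y1 = cmp \<eta>1 b1" using h1(4) by simp_all
    have x2: "x2 = cmp l2 a2" "y2 = cmp \<eta>2 b2" using h2(4) by simp_all
    have sb1: "s b1 = s a1" using s_comp[OF f1(2) A(1) A(3)] s_comp[OF g1(1) A(2) A(4)] A(5) by simp
    have sb2: "s b2 = s a2" using s_comp[OF f2(2) B(1) B(3)] s_comp[OF g2(1) B(2) B(4)] B(5) by simp
    have sl1: "s l1 = r a1" using f1(3) A(3) by simp
    have sl2: "s l2 = r a2" using f2(3) B(3) by simp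
    have se1: "s \<eta>1 = r b1" using g1(3) A(4) by simp
    have se2: "s \<eta>2 = r b2" using g2(3) B(4) by simp
    have sx1: "s x1 = s a1" "s y1 = s a1" using x1 s_comp[OF f1(1) A(1) sl1] s_comp[OF g1(2) A(2) se1] sb1 by simp_all
    have sx2: "s x2 = s a2" "s y2 = s a2" using x2 s_comp[OF f2(1) B(1) sl2] s_comp[OF g2(2) B(2) se2] sb2 by simp_all
    have "False" if "(p, q) \<in> LM x1 x2" for p q
    proof -
      note P = Lmin_D[OF that]
      have "(cmp l1 a1, cmp \<eta>1 b1) = (cmp l2 a2, cmp \<eta>2 b2)"
        by (rule mult_core[OF F G h1(1-3) h2(1-3) P(1) P(2)]) (use P(3,4,5) sx1 sx2 x1 x2 in simp_all)
      thus False using z(3) x1 x2 by simp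
    qed
    moreover have "False" if "(p, q) \<in> LM y1 y2" for p q
    proof -
      note P = Lmin_D[OF that]
      have "(cmp l1 a1, cmp \<eta>1 b1) = (cmp l2 a2, cmp \<eta>2 b2)"
        by (rule mult_core[OF F G h1(1-3) h2(1-3) P(1) P(2)]) (use P(3,4,5) sx1 sx2 x1 x2 in simp_all)
      thus False using z(3) x1 x2 by simp
    qed
    ultimately show ?thesis by auto
  qed
  show ?thesis unfolding S_Lambda_def using fin fib dis by blast
qed

lemma ar1: "(X::nat) + B = max A X \<Longrightarrow> E + B + G = max (E + B) Z \<Longrightarrow> X + (B + G) = max A (X + (Z - E))"
  unfolding max_def by (auto split: if_splits)

lemma ar2: "(E::nat) + G = max E Z \<Longrightarrow> X + G + B = max A (X + G) \<Longrightarrow> X + G + B = max A (X + (Z - E))"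
  unfolding max_def by (auto split: if_splits)

definition trip where
  "trip F G H = {(x, y). \<exists>l m \<xi> \<eta> \<zeta> \<theta> a b c. (l, m) \<in> F \<and> (\<xi>, \<eta>) \<in> G \<and> (\<zeta>, \<theta>) \<in> H \<and>
     a \<in> Mor \<and> b \<in> Mor \<and> c \<in> Mor \<and> s m = r a \<and> s \<xi> = r b \<and> s \<zeta> = r c \<and>
     cmp m a = cmp \<xi> b \<and> cmp \<eta> b = cmp \<zeta> c \<and>
     (\<forall>i. d (cmp \<xi> b) i = max (d m i) (d \<xi> i + (d \<zeta> i - d \<eta> i))) \<and>
     x = cmp l a \<and> y = cmp \<theta> c}"

lemma tripI:
  assumes "(l, m) \<in> F" "(\<xi>, \<eta>) \<in> G" "(\<zeta>, \<theta>) \<in> H" "a \<in> Mor" "b \<in> Mor" "c \<in> Mor"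
    "s m = r a" "s \<xi> = r b" "s \<zeta> = r c" "cmp m a = cmp \<xi> b" "cmp \<eta> b = cmp \<zeta> c"
    "\<And>i. d (cmp \<xi> b) i = max (d m i) (d \<xi> i + (d \<zeta> i - d \<eta> i))"
  shows "(cmp l a, cmp \<theta> c) \<in> trip F G H"
  unfolding trip_def using assms by blast

lemma tripE:
  assumes "z \<in> trip F G H"
  obtains l m \<xi> \<eta> \<zeta> \<theta> a b c where "(l, m) \<in> F" "(\<xi>, \<eta>) \<in> G" "(\<zeta>, \<theta>) \<in> H"
     "a \<in> Mor" "b \<in> Mor" "c \<in> Mor" "s m = r a" "s \<xi> = r b" "s \<zeta> = r c"
     "cmp m a = cmp \<xi> b" "cmp \<eta> b = cmp \<zeta> c"
     "\<forall>i. d (cmp \<xi> b) i = max (d m i) (d \<xi> i + (d \<zeta> i - d \<eta> i))"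
     "z = (cmp l a, cmp \<theta> c)"
proof -
  obtain x y where zxy: "z = (x, y)" by (cases z)
  have "\<exists>l m \<xi> \<eta> \<zeta> \<theta> a b c. (l, m) \<in> F \<and> (\<xi>, \<eta>) \<in> G \<and> (\<zeta>, \<theta>) \<in> H \<and>
     a \<in> Mor \<and> b \<in> Mor \<and> c \<in> Mor \<and> s m = r a \<and> s \<xi> = r b \<and> s \<zeta> = r c \<and>
     cmp m a = cmp \<xi> b \<and> cmp \<eta> b = cmp \<zeta> c \<and>
     (\<forall>i. d (cmp \<xi> b) i = max (d m i) (d \<xi> i + (d \<zeta> i - d \<eta> i))) \<and>
     x = cmp l a \<and> y = cmp \<theta> c" using assms zxy unfolding trip_def by simp
  then obtain l m \<xi> \<eta> \<zeta> \<theta> a b c where h: "(l, m) \<in> F" "(\<xi>, \<eta>) \<in> G" "(\<zeta>, \<theta>) \<in> H"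
     "a \<in> Mor" "b \<in> Mor" "c \<in> Mor" "s m = r a" "s \<xi> = r b" "s \<zeta> = r c"
     "cmp m a = cmp \<xi> b" "cmp \<eta> b = cmp \<zeta> c"
     "\<forall>i. d (cmp \<xi> b) i = max (d m i) (d \<xi> i + (d \<zeta> i - d \<eta> i))"
     "x = cmp l a" "y = cmp \<theta> c" by blast
  have h12: "\<And>i. d (cmp \<xi> b) i = max (d m i) (d \<xi> i + (d \<zeta> i - d \<eta> i))" using h(12) by blast
  show thesis by (rule that[OF h(1-12)]) (simp add: zxy h(13) h(14))
qed

lemma mult_memI: "(l, m) \<in> F \<Longrightarrow> (\<xi>, \<eta>) \<in> G \<Longrightarrow> (a, b) \<in> LM m \<xi> \<Longrightarrow> (cmp l a, cmp \<eta> b) \<in> mm F G"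
  unfolding mult_mem by blast

lemma lhs_sub:
  assumes F: "F \<in> SS" and G: "G \<in> SS" and H: "H \<in> SS"
  shows "mm (mm F G) H \<subseteq> trip F G H"
proof
  fix z assume "z \<in> mm (mm F G) H"
  then obtain l1 m1 \<zeta> \<theta> \<gamma> \<delta> where h: "(l1, m1) \<in> mm F G" "(\<zeta>, \<theta>) \<in> H" "(\<gamma>, \<delta>) \<in> LM m1 \<zeta>"
      "z = (cmp l1 \<gamma>, cmp \<theta> \<delta>)" by (rule mult_elem)
  obtain l m \<xi> \<eta> \<alpha> \<beta> where g: "(l, m) \<in> F" "(\<xi>, \<eta>) \<in> G" "(\<alpha>, \<beta>) \<in> LM m \<xi>"
      "(l1, m1) = (cmp l \<alpha>, cmp \<eta> \<beta>)" using h(1) by (rule mult_elem)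
  have l1: "l1 = cmp l \<alpha>" "m1 = cmp \<eta> \<beta>" using g(4) by simp_all
  have hC: "(\<gamma>, \<delta>) \<in> LM (cmp \<eta> \<beta>) \<zeta>" using h(3) l1 by simp
  note A = Lmin_D[OF g(3)] and C = Lmin_D[OF hC]
  note fF = S_fib[OF F g(1)] and fG = S_fib[OF G g(2)] and fH = S_fib[OF H h(2)]
  have sl: "s l = r \<alpha>" using fF(3) A(3) by simp
  have se: "s \<eta> = r \<beta>" using fG(3) A(4) by simp
  have sa: "s \<alpha> = s \<beta>" using s_comp[OF fF(2) A(1) A(3)] s_comp[OF fG(1) A(2) A(4)] A(5) by simp
  have eb: "cmp \<eta> \<beta> \<in> Mor" "s (cmp \<eta> \<beta>) = s \<beta>" using fG(2) A(2) se by simp_all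
  have sb: "s \<beta> = r \<gamma>" using eb(2) C(3) by simp
  have sag: "s \<alpha> = r \<gamma>" using sa sb by simp
  have ag: "cmp \<alpha> \<gamma> \<in> Mor" "r (cmp \<alpha> \<gamma>) = r \<alpha>" using A(1) C(1) sag by simp_all
  have bg: "cmp \<beta> \<gamma> \<in> Mor" "r (cmp \<beta> \<gamma>) = r \<beta>" using A(2) C(1) sb by simp_all
  have "cmp m (cmp \<alpha> \<gamma>) = cmp (cmp m \<alpha>) \<gamma>" using assoc[OF fF(2) A(1) C(1) A(3) sag] by simp
  also have "\<dots> = cmp (cmp \<xi> \<beta>) \<gamma>" using A(5) by simp
  also have "\<dots> = cmp \<xi> (cmp \<beta> \<gamma>)" using assoc[OF fG(1) A(2) C(1) A(4) sb] by simp
  finally have e1: "cmp m (cmp \<alpha> \<gamma>) = cmp \<xi> (cmp \<beta> \<gamma>)" .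
  have e2: "cmp \<eta> (cmp \<beta> \<gamma>) = cmp \<zeta> \<delta>" using assoc[OF fG(2) A(2) C(1) se sb] C(5) by simp
  have deg: "d (cmp \<xi> (cmp \<beta> \<gamma>)) i = max (d m i) (d \<xi> i + (d \<zeta> i - d \<eta> i))" for i
  proof -
    have 1: "d \<xi> i + d \<beta> i = max (d m i) (d \<xi> i)"
      using A(6)[of i] A(5) d_comp_i[OF fG(1) A(2) A(4)] by simp
    have 2: "d \<eta> i + d \<beta> i + d \<gamma> i = max (d \<eta> i + d \<beta> i) (d \<zeta> i)"
      using C(6)[of i] d_comp_i[OF eb(1) C(1) C(3)] d_comp_i[OF fG(2) A(2) se] by simp
    have 3: "d (cmp \<xi> (cmp \<beta> \<gamma>)) i = d \<xi> i + (d \<beta> i + d \<gamma> i)"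
      using d_comp_i[OF fG(1) bg(1)] bg(2) A(4) d_comp_i[OF A(2) C(1) sb] by simp
    show ?thesis using ar1[OF 1 2] 3 by simp
  qed
  have x: "cmp l1 \<gamma> = cmp l (cmp \<alpha> \<gamma>)" using l1 assoc[OF fF(1) A(1) C(1) sl sag] by simp
  have "(cmp l (cmp \<alpha> \<gamma>), cmp \<theta> \<delta>) \<in> trip F G H"
    by (rule tripI[OF g(1) g(2) h(2) ag(1) bg(1) C(2) _ _ C(4) e1 e2 deg])
       (use ag(2) bg(2) A(3) A(4) in simp_all)
  thus "z \<in> trip F G H" using h(4) x by simp
qed

lemma lhs_sup:
  assumes F: "F \<in> SS" and G: "G \<in> SS" and H: "H \<in> SS"
  shows "trip F G H \<subseteq> mm (mm F G) H"
proof
  fix z assume "z \<in> trip F G H"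
  then obtain l m \<xi> \<eta> \<zeta> \<theta> a b c where t: "(l, m) \<in> F" "(\<xi>, \<eta>) \<in> G" "(\<zeta>, \<theta>) \<in> H"
     "a \<in> Mor" "b \<in> Mor" "c \<in> Mor" "s m = r a" "s \<xi> = r b" "s \<zeta> = r c"
     "cmp m a = cmp \<xi> b" "cmp \<eta> b = cmp \<zeta> c"
     "\<forall>i. d (cmp \<xi> b) i = max (d m i) (d \<xi> i + (d \<zeta> i - d \<eta> i))"
     "z = (cmp l a, cmp \<theta> c)" by (rule tripE)
  note fF = S_fib[OF F t(1)] and fG = S_fib[OF G t(2)] and fH = S_fib[OF H t(3)]
  obtain \<alpha> \<beta> e where E1: "(\<alpha>, \<beta>) \<in> LM m \<xi>" "e \<in> Mor" "s \<alpha> = r e" "s \<beta> = r e" "a = cmp \<alpha> e" "b = cmp \<beta> e"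
    using ext_Lmin[OF fF(2) fG(1) t(4) t(5) t(7) t(8) t(10)] by blast
  note A = Lmin_D[OF E1(1)]
  have se: "s \<eta> = r \<beta>" using fG(3) A(4) by simp
  have sl: "s l = r \<alpha>" using fF(3) A(3) by simp
  have eb: "cmp \<eta> \<beta> \<in> Mor" "s (cmp \<eta> \<beta>) = s \<beta>" using fG(2) A(2) se by simp_all
  have eq2: "cmp (cmp \<eta> \<beta>) e = cmp \<zeta> c" using assoc[OF fG(2) A(2) E1(2) se E1(4)] E1(6) t(11) by simp
  obtain \<gamma> \<delta> e' where E2: "(\<gamma>, \<delta>) \<in> LM (cmp \<eta> \<beta>) \<zeta>" "e' \<in> Mor" "s \<gamma> = r e'" "s \<delta> = r e'"
      "e = cmp \<gamma> e'" "c = cmp \<delta> e'"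
    using ext_Lmin[OF eb(1) fH(1) E1(2) t(6) _ t(9) eq2] eb(2) E1(4) by auto
  note C = Lmin_D[OF E2(1)]
  have sb: "s \<beta> = r \<gamma>" using C(3) eb(2) by simp
  have d0: "d e' i = 0" for i
  proof -
    have 1: "d \<xi> i + d \<beta> i = max (d m i) (d \<xi> i)"
      using A(6)[of i] A(5) d_comp_i[OF fG(1) A(2) A(4)] by simp
    have 2: "d \<eta> i + d \<beta> i + d \<gamma> i = max (d \<eta> i + d \<beta> i) (d \<zeta> i)"
      using C(6)[of i] d_comp_i[OF eb(1) C(1) C(3)] d_comp_i[OF fG(2) A(2) se] by simp
    have 3: "d (cmp \<xi> b) i = d \<xi> i + (d \<beta> i + d \<gamma> i) + d e' i"
      using d_comp_i[OF fG(1) t(5) t(8)] E1(6) d_comp_i[OF A(2) E1(2) E1(4)] E2(5)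
        d_comp_i[OF C(1) E2(2) E2(3)] by simp
    show ?thesis using ar1[OF 1 2] 3 t(12)[rule_format, of i] by simp
  qed
  have e'1: "e' = s \<gamma>" "e' = s \<delta>" using deg0[OF E2(2) d0] E2(3,4) by simp_all
  have ee1: "e = \<gamma>" using E2(5) e'1(1) idr[OF C(1)] by simp
  have ee2: "c = \<delta>" using E2(6) e'1(2) idr[OF C(2)] by simp
  note ee = ee1 ee2
  have m1: "(cmp l \<alpha>, cmp \<eta> \<beta>) \<in> mm F G" by (rule mult_memI[OF t(1) t(2) E1(1)])
  have x: "cmp l a = cmp (cmp l \<alpha>) \<gamma>" using E1(5) ee assoc[OF fF(1) A(1) C(1) sl] E1(3) E2(3) e'1
    by (metis sb sl fF(1))
  have "(cmp (cmp l \<alpha>) \<gamma>, cmp \<theta> \<delta>) \<in> mm (mm F G) H" by (rule mult_memI[OF m1 t(3) E2(1)])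
  thus "z \<in> mm (mm F G) H" using t(13) x ee by simp
qed

lemma rhs_sub:
  assumes F: "F \<in> SS" and G: "G \<in> SS" and H: "H \<in> SS"
  shows "mm F (mm G H) \<subseteq> trip F G H"
proof
  fix z assume "z \<in> mm F (mm G H)"
  then obtain l m l2 m2 \<alpha> \<beta> where h: "(l, m) \<in> F" "(l2, m2) \<in> mm G H" "(\<alpha>, \<beta>) \<in> LM m l2"
      "z = (cmp l \<alpha>, cmp m2 \<beta>)" by (rule mult_elem)
  obtain \<xi> \<eta> \<zeta> \<theta> \<gamma> \<delta> where g: "(\<xi>, \<eta>) \<in> G" "(\<zeta>, \<theta>) \<in> H" "(\<gamma>, \<delta>) \<in> LM \<eta> \<zeta>"
      "(l2, m2) = (cmp \<xi> \<gamma>, cmp \<theta> \<delta>)" using h(2) by (rule mult_elem)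
  have l2: "l2 = cmp \<xi> \<gamma>" "m2 = cmp \<theta> \<delta>" using g(4) by simp_all
  have hA: "(\<alpha>, \<beta>) \<in> LM m (cmp \<xi> \<gamma>)" using h(3) l2 by simp
  note C = Lmin_D[OF g(3)] and A = Lmin_D[OF hA]
  note fF = S_fib[OF F h(1)] and fG = S_fib[OF G g(1)] and fH = S_fib[OF H g(2)]
  have se: "s \<xi> = r \<gamma>" using fG(3) C(3) by simp
  have sg: "s \<gamma> = s \<delta>" using s_comp[OF fG(2) C(1) C(3)] s_comp[OF fH(1) C(2) C(4)] C(5) by simp
  have xg: "cmp \<xi> \<gamma> \<in> Mor" "s (cmp \<xi> \<gamma>) = s \<gamma>" using fG(1) C(1) se by simp_all
  have sgb: "s \<gamma> = r \<beta>" using A(4) xg(2) by simp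
  have sdb: "s \<delta> = r \<beta>" using sgb sg by simp
  have st: "s \<theta> = r \<delta>" using fH(3) C(4) by simp
  have gb: "cmp \<gamma> \<beta> \<in> Mor" "r (cmp \<gamma> \<beta>) = r \<gamma>" using C(1) A(2) sgb by simp_all
  have db: "cmp \<delta> \<beta> \<in> Mor" "r (cmp \<delta> \<beta>) = r \<delta>" using C(2) A(2) sdb by simp_all
  have e1: "cmp m \<alpha> = cmp \<xi> (cmp \<gamma> \<beta>)" using A(5) assoc[OF fG(1) C(1) A(2) se sgb] by simp
  have "cmp \<eta> (cmp \<gamma> \<beta>) = cmp (cmp \<eta> \<gamma>) \<beta>" using assoc[OF fG(2) C(1) A(2) C(3) sgb] by simp
  also have "\<dots> = cmp (cmp \<zeta> \<delta>) \<beta>" using C(5) by simp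
  also have "\<dots> = cmp \<zeta> (cmp \<delta> \<beta>)" using assoc[OF fH(1) C(2) A(2) C(4) sdb] by simp
  finally have e2: "cmp \<eta> (cmp \<gamma> \<beta>) = cmp \<zeta> (cmp \<delta> \<beta>)" .
  have deg: "\<forall>i. d (cmp \<xi> (cmp \<gamma> \<beta>)) i = max (d m i) (d \<xi> i + (d \<zeta> i - d \<eta> i))"
  proof
    fix i
    have 1: "d \<eta> i + d \<gamma> i = max (d \<eta> i) (d \<zeta> i)"
      using C(6)[of i] d_comp_i[OF fG(2) C(1) C(3)] by simp
    have 2: "d \<xi> i + d \<gamma> i + d \<beta> i = max (d m i) (d \<xi> i + d \<gamma> i)"
      using A(6)[of i] A(5) d_comp_i[OF xg(1) A(2)] xg(2) sgb d_comp_i[OF fG(1) C(1) se] by simp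
    have 3: "d (cmp \<xi> (cmp \<gamma> \<beta>)) i = d \<xi> i + d \<gamma> i + d \<beta> i"
      using d_comp_i[OF fG(1) gb(1)] gb(2) se d_comp_i[OF C(1) A(2) sgb] by simp
    show "d (cmp \<xi> (cmp \<gamma> \<beta>)) i = max (d m i) (d \<xi> i + (d \<zeta> i - d \<eta> i))"
      using ar2[OF 1 2] 3 by simp
  qed
  have y: "cmp m2 \<beta> = cmp \<theta> (cmp \<delta> \<beta>)" using l2 assoc[OF fH(2) C(2) A(2) st sdb] by simp
  have "(cmp l \<alpha>, cmp \<theta> (cmp \<delta> \<beta>)) \<in> trip F G H"
    by (rule tripI[OF h(1) g(1) g(2) A(1) gb(1) db(1) A(3) _ _ e1 e2 deg[rule_format]])
       (use gb(2) db(2) se C(4) in simp_all)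
  thus "z \<in> trip F G H" using h(4) y by simp
qed

lemma rhs_sup:
  assumes F: "F \<in> SS" and G: "G \<in> SS" and H: "H \<in> SS"
  shows "trip F G H \<subseteq> mm F (mm G H)"
proof
  fix z assume "z \<in> trip F G H"
  then obtain l m \<xi> \<eta> \<zeta> \<theta> a b c where t: "(l, m) \<in> F" "(\<xi>, \<eta>) \<in> G" "(\<zeta>, \<theta>) \<in> H"
     "a \<in> Mor" "b \<in> Mor" "c \<in> Mor" "s m = r a" "s \<xi> = r b" "s \<zeta> = r c"
     "cmp m a = cmp \<xi> b" "cmp \<eta> b = cmp \<zeta> c"
     "\<forall>i. d (cmp \<xi> b) i = max (d m i) (d \<xi> i + (d \<zeta> i - d \<eta> i))"
     "z = (cmp l a, cmp \<theta> c)" by (rule tripE)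
  note fF = S_fib[OF F t(1)] and fG = S_fib[OF G t(2)] and fH = S_fib[OF H t(3)]
  have seb: "s \<eta> = r b" using fG(3) t(8) by simp
  obtain \<gamma> \<delta> e where E1: "(\<gamma>, \<delta>) \<in> LM \<eta> \<zeta>" "e \<in> Mor" "s \<gamma> = r e" "s \<delta> = r e" "b = cmp \<gamma> e" "c = cmp \<delta> e"
    using ext_Lmin[OF fG(2) fH(1) t(5) t(6) seb t(9) t(11)] by blast
  note C = Lmin_D[OF E1(1)]
  have se: "s \<xi> = r \<gamma>" using fG(3) C(3) by simp
  have sg: "s \<gamma> = s \<delta>" using s_comp[OF fG(2) C(1) C(3)] s_comp[OF fH(1) C(2) C(4)] C(5) by simp
  have xg: "cmp \<xi> \<gamma> \<in> Mor" "s (cmp \<xi> \<gamma>) = s \<gamma>" using fG(1) C(1) se by simp_all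
  have eq: "cmp m a = cmp (cmp \<xi> \<gamma>) e" using t(10) E1(5) assoc[OF fG(1) C(1) E1(2) se E1(3)] by simp
  obtain \<alpha> \<beta> e' where E2: "(\<alpha>, \<beta>) \<in> LM m (cmp \<xi> \<gamma>)" "e' \<in> Mor" "s \<alpha> = r e'" "s \<beta> = r e'"
      "a = cmp \<alpha> e'" "e = cmp \<beta> e'"
    using ext_Lmin[OF fF(2) xg(1) t(4) E1(2) t(7) _ eq] xg(2) E1(3) by auto
  note A = Lmin_D[OF E2(1)]
  have sgb: "s \<gamma> = r \<beta>" using A(4) xg(2) by simp
  have d0: "d e' i = 0" for i
  proof -
    have 1: "d \<eta> i + d \<gamma> i = max (d \<eta> i) (d \<zeta> i)"
      using C(6)[of i] d_comp_i[OF fG(2) C(1) C(3)] by simp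
    have 2: "d \<xi> i + d \<gamma> i + d \<beta> i = max (d m i) (d \<xi> i + d \<gamma> i)"
      using A(6)[of i] A(5) d_comp_i[OF xg(1) A(2)] xg(2) sgb d_comp_i[OF fG(1) C(1) se] by simp
    have 3: "d (cmp \<xi> b) i = d \<xi> i + d \<gamma> i + d \<beta> i + d e' i"
      using d_comp_i[OF fG(1) t(5) t(8)] E1(5) d_comp_i[OF C(1) E1(2) E1(3)] E2(6)
        d_comp_i[OF A(2) E2(2) E2(4)] by simp
    show ?thesis using ar2[OF 1 2] 3 t(12)[rule_format, of i] by simp
  qed
  have e'1: "e' = s \<alpha>" "e' = s \<beta>" using deg0[OF E2(2) d0] E2(3,4) by simp_all
  have ee1: "a = \<alpha>" using E2(5) e'1(1) idr[OF A(1)] by simp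
  have ee2: "e = \<beta>" using E2(6) e'1(2) idr[OF A(2)] by simp
  have m1: "(cmp \<xi> \<gamma>, cmp \<theta> \<delta>) \<in> mm G H" by (rule mult_memI[OF t(2) t(3) E1(1)])
  have sdb: "s \<delta> = r \<beta>" using sg sgb by simp
  have st: "s \<theta> = r \<delta>" using fH(3) C(4) by simp
  have y: "cmp \<theta> c = cmp (cmp \<theta> \<delta>) \<beta>" using E1(6) ee2 assoc[OF fH(2) C(2) A(2) st sdb] by simp
  have "(cmp l \<alpha>, cmp (cmp \<theta> \<delta>) \<beta>) \<in> mm F (mm G H)" by (rule mult_memI[OF t(1) m1 E2(1)])
  thus "z \<in> mm F (mm G H)" using t(13) y ee1 by simp
qed

lemma mult_assoc: "F \<in> SS \<Longrightarrow> G \<in> SS \<Longrightarrow> H \<in> SS \<Longrightarrow> mm (mm F G) H = mm F (mm G H)"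
  by (rule subset_antisym) (rule subset_trans[OF lhs_sub rhs_sup] subset_trans[OF rhs_sub lhs_sup]; assumption)+

lemma star_D: "(x, y) \<in> S_star F \<Longrightarrow> (y, x) \<in> F" unfolding S_star_def by simp
lemma star_I: "(y, x) \<in> F \<Longrightarrow> (x, y) \<in> S_star F" unfolding S_star_def by simp

lemma star_S: assumes F: "F \<in> SS" shows "S_star F \<in> SS"
proof -
  have e: "S_star F = prod.swap ` F"
  proof (intro set_eqI iffI)
    fix z assume "z \<in> S_star F"
    moreover obtain x y where "z = (x, y)" by (cases z)
    ultimately have "(y, x) \<in> F" "z = prod.swap (y, x)" using star_D by simp_all
    thus "z \<in> prod.swap ` F" by blast
  next
    fix z assume "z \<in> prod.swap ` F"
    then obtain w where w: "w \<in> F" "z = prod.swap w" by blast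
    obtain x y where "w = (x, y)" by (cases w)
    thus "z \<in> S_star F" using w star_I by simp
  qed
  have fin: "finite (S_star F)" unfolding e using F unfolding S_Lambda_def by simp
  have fib: "S_star F \<subseteq> fib_s Mor s"
  proof
    fix z assume z: "z \<in> S_star F"
    obtain x y where zx: "z = (x, y)" by (cases z)
    hence "(y, x) \<in> F" using z star_D by simp
    note f = S_fib[OF F this]
    show "z \<in> fib_s Mor s" unfolding fib_s_def zx using f by simp
  qed
  have dis: "LM l n = {} \<and> LM m w = {}"
    if "(l, m) \<in> S_star F" "(n, w) \<in> S_star F" "(l, m) \<noteq> (n, w)" for l m n w
  proof -
    have "(m, l) \<in> F" "(w, n) \<in> F" "(m, l) \<noteq> (w, n)" using star_D[OF that(1)] star_D[OF that(2)] that(3) by auto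
    from S_dis[OF F this] show ?thesis by simp
  qed
  show ?thesis unfolding S_Lambda_def using fin fib dis by blast
qed

lemma star_star: "S_star (S_star F) = F" unfolding S_star_def by auto

lemma FFs: assumes F: "F \<in> SS" shows "mm F (S_star F) = {(l, l) | l m. (l, m) \<in> F}"
proof (intro set_eqI iffI)
  fix z assume "z \<in> mm F (S_star F)"
  then obtain l m \<xi> \<eta> a b where h: "(l, m) \<in> F" "(\<xi>, \<eta>) \<in> S_star F" "(a, b) \<in> LM m \<xi>"
      "z = (cmp l a, cmp \<eta> b)" by (rule mult_elem)
  have h2: "(\<eta>, \<xi>) \<in> F" using star_D[OF h(2)] .
  note f = S_fib[OF F h(1)]
  have "(l, m) = (\<eta>, \<xi>)"
  proof (rule ccontr)
    assume "(l, m) \<noteq> (\<eta>, \<xi>)"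
    hence "LM m \<xi> = {}" using S_dis[OF F h(1) h2] by simp
    thus False using h(3) by simp
  qed
  hence lm: "\<eta> = l" "\<xi> = m" by simp_all
  have "(a, b) \<in> {(s m, s m)}" using h(3) lm Lmin_self[OF f(2)] by simp
  hence ab: "a = s m" "b = s m" by simp_all
  have "z = (l, l)" using h(4) ab lm f(3) idr[OF f(1)] by simp
  thus "z \<in> {(l, l) | l m. (l, m) \<in> F}" using h(1) by blast
next
  fix z assume "z \<in> {(l, l) | l m. (l, m) \<in> F}"
  then obtain l m where h: "z = (l, l)" "(l, m) \<in> F" by blast
  note f = S_fib[OF F h(2)]
  have q1: "(s m, s m) \<in> LM m m" using Lmin_self[OF f(2)] by simp
  have q2: "(m, l) \<in> S_star F" using star_I[OF h(2)] .
  have "(cmp l (s m), cmp l (s m)) \<in> mm F (S_star F)" by (rule mult_memI[OF h(2) q2 q1])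
  moreover have "cmp l (s m) = l" using f(3) idr[OF f(1)] by simp
  ultimately show "z \<in> mm F (S_star F)" using h(1) by simp
qed

lemma DF: assumes F: "F \<in> SS" shows "mm {(l, l) | l m. (l, m) \<in> F} F = F"
proof (intro set_eqI iffI)
  fix z assume "z \<in> mm {(l, l) | l m. (l, m) \<in> F} F"
  then obtain l l' \<xi> \<eta> a b where h: "(l, l') \<in> {(l, l) | l m. (l, m) \<in> F}" "(\<xi>, \<eta>) \<in> F" "(a, b) \<in> LM l' \<xi>"
      "z = (cmp l a, cmp \<eta> b)" by (rule mult_elem)
  obtain m where lm: "l' = l" "(l, m) \<in> F" using h(1) by blast
  note f = S_fib[OF F lm(2)]
  have "(l, m) = (\<xi>, \<eta>)"
  proof (rule ccontr)
    assume "(l, m) \<noteq> (\<xi>, \<eta>)"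
    hence "LM l \<xi> = {}" using S_dis[OF F lm(2) h(2)] by simp
    thus False using h(3) lm(1) by simp
  qed
  hence le: "\<xi> = l" "\<eta> = m" by simp_all
  have "(a, b) \<in> {(s l, s l)}" using h(3) lm(1) le Lmin_self[OF f(1)] by simp
  hence ab: "a = s l" "b = s l" by simp_all
  have "z = (l, m)" using h(4) ab le f(3) idr[OF f(1)] idr[OF f(2)] by simp
  thus "z \<in> F" using lm(2) by simp
next
  fix z assume z: "z \<in> F"
  obtain l m where h: "z = (l, m)" by (cases z)
  have h2: "(l, m) \<in> F" using z h by simp
  note f = S_fib[OF F h2]
  have q1: "(s l, s l) \<in> LM l l" using Lmin_self[OF f(1)] by simp
  have q2: "(l, l) \<in> {(l, l) | l m. (l, m) \<in> F}" using h2 by blast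
  have "(cmp l (s l), cmp m (s l)) \<in> mm {(l, l) | l m. (l, m) \<in> F} F"
    by (rule mult_memI[OF q2 h2 q1])
  moreover have "cmp l (s l) = l" "cmp m (s l) = m" using f(3) idr[OF f(1)] idr[OF f(2)] by simp_all
  ultimately show "z \<in> mm {(l, l) | l m. (l, m) \<in> F} F" using h by simp
qed

lemma FFsF: "F \<in> SS \<Longrightarrow> mm (mm F (S_star F)) F = F" using FFs DF by simp

lemma d0_comp:
  assumes "x \<in> Mor" "y \<in> Mor" "s x = r y" "v \<in> Mor" "cmp x y = s v"
  shows "x = r x" "y = r y"
proof -
  have "d x i = 0 \<and> d y i = 0" for i
    using d_comp_i[OF assms(1-3), of i] d_s[OF assms(4), of i] assms(5) by simp
  thus "x = r x" "y = r y" using deg0(1)[OF assms(1)] deg0(1)[OF assms(2)] by blast+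
qed

lemma inv_lemma:
  assumes F: "F \<in> SS" and G: "G \<in> SS" and eq: "mm (mm F G) F = F" and lm: "(l, m) \<in> F"
  shows "\<exists>\<xi> \<eta> \<beta>. (\<xi>, \<eta>) \<in> G \<and> \<beta> \<in> Mor \<and> s \<xi> = r \<beta> \<and> m = cmp \<xi> \<beta> \<and> l = cmp \<eta> \<beta>"
proof -
  have "(l, m) \<in> mm (mm F G) F" using eq lm by simp
  then obtain l1 m1 l2 m2 a b where h: "(l1, m1) \<in> mm F G" "(l2, m2) \<in> F" "(a, b) \<in> LM m1 l2"
      "(l, m) = (cmp l1 a, cmp m2 b)" by (rule mult_elem)
  obtain p q \<xi> \<eta> \<alpha> \<beta> where g: "(p, q) \<in> F" "(\<xi>, \<eta>) \<in> G" "(\<alpha>, \<beta>) \<in> LM q \<xi>"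
      "(l1, m1) = (cmp p \<alpha>, cmp \<eta> \<beta>)" using h(1) by (rule mult_elem)
  have l1: "l1 = cmp p \<alpha>" "m1 = cmp \<eta> \<beta>" using g(4) by simp_all
  have lm1: "l = cmp l1 a" "m = cmp m2 b" using h(4) by simp_all
  have hC: "(a, b) \<in> LM (cmp \<eta> \<beta>) l2" using h(3) l1 by simp
  note A = Lmin_D[OF g(3)] and C = Lmin_D[OF hC]
  note fP = S_fib[OF F g(1)] and fG = S_fib[OF G g(2)] and f2 = S_fib[OF F h(2)] and fL = S_fib[OF F lm]
  have sp: "s p = r \<alpha>" using fP(3) A(3) by simp
  have se: "s \<eta> = r \<beta>" using fG(3) A(4) by simp
  have sa: "s \<alpha> = s \<beta>" using s_comp[OF fP(2) A(1) A(3)] s_comp[OF fG(1) A(2) A(4)] A(5) by simp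
  have eb: "cmp \<eta> \<beta> \<in> Mor" "s (cmp \<eta> \<beta>) = s \<beta>" using fG(2) A(2) se by simp_all
  have sb: "s \<beta> = r a" using eb(2) C(3) by simp
  have saa: "s \<alpha> = r a" using sa sb by simp
  have pa: "cmp \<alpha> a \<in> Mor" "r (cmp \<alpha> a) = r \<alpha>" using A(1) C(1) saa by simp_all
  have lpa: "l = cmp p (cmp \<alpha> a)" using lm1(1) l1(1) assoc[OF fP(1) A(1) C(1) sp saa] by simp
  have l_eq: "cmp l (s l) = cmp p (cmp \<alpha> a)" using lpa idr[OF fL(1)] by simp
  have 1: "(l, m) = (p, q)"
    by (rule S_disj1[OF F lm g(1) s_mor[OF fL(1)] pa(1) _ _ l_eq]) (use fL(1) pa(2) sp in simp_all)
  hence pq: "p = l" "q = m" by simp_all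
  have meq: "cmp m (s m) = cmp m2 b" using lm1(2) idr[OF fL(2)] by simp
  have 2: "(l, m) = (l2, m2)"
    by (rule S_disj2[OF F lm h(2) s_mor[OF fL(2)] C(2) _ _ meq]) (use fL(2) C(4) f2(3) in simp_all)
  hence l2: "l2 = l" "m2 = m" by simp_all
  have "cmp l (s l) = cmp l (cmp \<alpha> a)" using l_eq pq by simp
  hence "s l = cmp \<alpha> a"
    by (rule left_cancel[OF fL(1) s_mor[OF fL(1)] pa(1), rotated -1]) (use fL(1) pa(2) A(1) sp pq in simp_all)
  hence z: "\<alpha> = r \<alpha>" "a = r a" using d0_comp[OF A(1) C(1) saa fL(1)] by simp_all
  have \<alpha>: "\<alpha> = s m" using z(1) A(3) pq by simp
  have a: "a = s (cmp \<eta> \<beta>)" using z(2) C(3) by simp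
  have mq: "m = cmp \<xi> \<beta>" using A(5) pq \<alpha> idr[OF fL(2)] by simp
  have "cmp (cmp \<eta> \<beta>) a = cmp l b" using C(5) l2 by simp
  moreover have "cmp m (s m) = cmp m b" using meq l2 by simp
  hence "s m = b"
    by (rule left_cancel[OF fL(2) s_mor[OF fL(2)] C(2), rotated -1]) (use fL C(2) C(4) l2 in simp_all)
  ultimately have "cmp (cmp \<eta> \<beta>) a = l" using idr[OF fL(1)] fL(3) by simp
  hence "l = cmp \<eta> \<beta>" using a idr[OF eb(1)] by simp
  thus ?thesis using mq g(2) A(2) A(4) by blast
qed

lemma inv_uniq:
  assumes F: "F \<in> SS" and G: "G \<in> SS" and e1: "mm (mm F G) F = F" and e2: "mm (mm G F) G = G"
  shows "G = S_star F"
proof -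
  have sub1: "(m, l) \<in> G" if lm: "(l, m) \<in> F" for l m
  proof -
    obtain \<xi> \<eta> \<beta> where a: "(\<xi>, \<eta>) \<in> G" "\<beta> \<in> Mor" "s \<xi> = r \<beta>" "m = cmp \<xi> \<beta>" "l = cmp \<eta> \<beta>"
      using inv_lemma[OF F G e1 lm] by blast
    obtain l' m' \<beta>' where b: "(l', m') \<in> F" "\<beta>' \<in> Mor" "s l' = r \<beta>'" "\<eta> = cmp l' \<beta>'" "\<xi> = cmp m' \<beta>'"
      using inv_lemma[OF G F e2 a(1)] by blast
    note f = S_fib[OF F lm] and g = S_fib[OF G a(1)] and f' = S_fib[OF F b(1)]
    have se: "s \<eta> = r \<beta>" using g(3) a(3) by simp
    have sb': "s \<beta>' = r \<beta>" using se b(4) s_comp[OF f'(1) b(2) b(3)] by simp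
    have bb: "cmp \<beta>' \<beta> \<in> Mor" "r (cmp \<beta>' \<beta>) = r \<beta>'" using b(2) a(2) sb' by simp_all
    have l_eq: "cmp l (s l) = cmp l' (cmp \<beta>' \<beta>)"
      using idr[OF f(1)] a(5) b(4) assoc[OF f'(1) b(2) a(2) b(3) sb'] by simp
    have 1: "(l, m) = (l', m')"
      by (rule S_disj1[OF F lm b(1) s_mor[OF f(1)] bb(1) _ _ l_eq]) (use f(1) bb(2) b(3) in simp_all)
    hence ll: "l' = l" "m' = m" by simp_all
    have "cmp l (s l) = cmp l (cmp \<beta>' \<beta>)" using l_eq ll by simp
    hence "s l = cmp \<beta>' \<beta>"
      by (rule left_cancel[OF f(1) s_mor[OF f(1)] bb(1), rotated -1]) (use f(1) bb(2) b(2) b(3) ll in simp_all)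
    hence z: "\<beta> = r \<beta>" using d0_comp[OF b(2) a(2) sb' f(1)] by simp
    have "m = \<xi>" using a(4) a(3) z idr[OF g(1)] by simp
    moreover have "l = \<eta>" using a(5) se z idr[OF g(2)] by simp
    ultimately show ?thesis using a(1) by simp
  qed
  have sub2: "(\<eta>, \<xi>) \<in> F" if xe: "(\<xi>, \<eta>) \<in> G" for \<xi> \<eta>
  proof -
    obtain l m \<beta> where a: "(l, m) \<in> F" "\<beta> \<in> Mor" "s l = r \<beta>" "\<eta> = cmp l \<beta>" "\<xi> = cmp m \<beta>"
      using inv_lemma[OF G F e2 xe] by blast
    obtain \<xi>' \<eta>' \<beta>' where b: "(\<xi>', \<eta>') \<in> G" "\<beta>' \<in> Mor" "s \<xi>' = r \<beta>'" "m = cmp \<xi>' \<beta>'" "l = cmp \<eta>' \<beta>'"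
      using inv_lemma[OF F G e1 a(1)] by blast
    note g = S_fib[OF G xe] and f = S_fib[OF F a(1)] and g' = S_fib[OF G b(1)]
    have se': "s \<eta>' = r \<beta>'" using g'(3) b(3) by simp
    have sb': "s \<beta>' = r \<beta>" using a(3) b(5) s_comp[OF g'(2) b(2) se'] by simp
    have bb: "cmp \<beta>' \<beta> \<in> Mor" "r (cmp \<beta>' \<beta>) = r \<beta>'" using b(2) a(2) sb' by simp_all
    have e_eq: "cmp \<eta> (s \<eta>) = cmp \<eta>' (cmp \<beta>' \<beta>)"
      using idr[OF g(2)] a(4) b(5) assoc[OF g'(2) b(2) a(2) se' sb'] by simp
    have 1: "(\<xi>, \<eta>) = (\<xi>', \<eta>')"
      by (rule S_disj2[OF G xe b(1) s_mor[OF g(2)] bb(1) _ _ e_eq]) (use g(2) bb(2) se' in simp_all)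
    hence ee: "\<xi>' = \<xi>" "\<eta>' = \<eta>" by simp_all
    have "cmp \<eta> (s \<eta>) = cmp \<eta> (cmp \<beta>' \<beta>)" using e_eq ee by simp
    hence "s \<eta> = cmp \<beta>' \<beta>"
      by (rule left_cancel[OF g(2) s_mor[OF g(2)] bb(1), rotated -1]) (use g(2) bb(2) b(2) se' ee in simp_all)
    hence z: "\<beta> = r \<beta>" using d0_comp[OF b(2) a(2) sb' g(2)] by simp
    have "\<eta> = l" using a(4) a(3) z idr[OF f(1)] by simp
    moreover have "\<xi> = m" using a(5) a(3) f(3) z idr[OF f(2)] by simp
    ultimately show ?thesis using a(1) by simp
  qed
  show ?thesis
  proof (intro set_eqI iffI)
    fix z assume z: "z \<in> G"
    obtain x y where zx: "z = (x, y)" by (cases z)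
    show "z \<in> S_star F" using star_I[OF sub2] z zx by simp
  next
    fix z assume z: "z \<in> S_star F"
    obtain x y where zx: "z = (x, y)" by (cases z)
    show "z \<in> G" using sub1[OF star_D] z zx by simp
  qed
qed

end

theorem proposition4p4:
  fixes k :: nat and Mor Obj :: "'a set" and r s :: "'a \<Rightarrow> 'a"
    and cmp :: "'a \<Rightarrow> 'a \<Rightarrow> 'a" and d :: "'a \<Rightarrow> nat \<Rightarrow> nat"
  assumes "k_graph k Mor Obj r s cmp d"
    and "finitely_aligned Mor r s cmp d"
  defines "S \<equiv> S_Lambda Mor r s cmp d"
    and "mult \<equiv> S_mult Mor r s cmp d"
  shows "(\<forall>F\<in>S. \<forall>G\<in>S. mult F G \<in> S)
    \<and> (\<forall>F\<in>S. \<forall>G\<in>S. \<forall>H\<in>S. mult (mult F G) H = mult F (mult G H))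
    \<and> (\<forall>F\<in>S. S_star F \<in> S
          \<and> mult (mult F (S_star F)) F = F
          \<and> mult (mult (S_star F) F) (S_star F) = S_star F
          \<and> (\<forall>G\<in>S. mult (mult F G) F = F \<and> mult (mult G F) G = G \<longrightarrow> G = S_star F))"
proof -
  interpret kg k Mor Obj r s cmp d by (rule kg.intro) (rule assms(1))
  have c1: "\<forall>F\<in>S. \<forall>G\<in>S. mult F G \<in> S"
    unfolding S_def mult_def using mult_closed[OF assms(2)] by blast
  have c2: "\<forall>F\<in>S. \<forall>G\<in>S. \<forall>H\<in>S. mult (mult F G) H = mult F (mult G H)"
    unfolding S_def mult_def using mult_assoc by blast
  have c3: "S_star F \<in> S \<and> mult (mult F (S_star F)) F = F
          \<and> mult (mult (S_star F) F) (S_star F) = S_star F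
          \<and> (\<forall>G\<in>S. mult (mult F G) F = F \<and> mult (mult G F) G = G \<longrightarrow> G = S_star F)"
    if F: "F \<in> S" for F
  proof -
    have F': "F \<in> SS" using F unfolding S_def .
    have "mm (mm (S_star F) (S_star (S_star F))) (S_star F) = S_star F"
      by (rule FFsF[OF star_S[OF F']])
    hence e: "mm (mm (S_star F) F) (S_star F) = S_star F" by (simp only: star_star)
    have u: "\<forall>G\<in>SS. mm (mm F G) F = F \<and> mm (mm G F) G = G \<longrightarrow> G = S_star F"
      using inv_uniq[OF F'] by blast
    show ?thesis unfolding S_def mult_def using star_S[OF F'] FFsF[OF F'] e u by (intro conjI)
  qed
  show ?thesis using c1 c2 c3 by blast
qed

end
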